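(* Let $a_1,\dots,a_n\in S^d$, and run Algorithm 2.9 (described in the context). Then $\mathrm{def}\,Q_k\le t^{-1}$ after at most $t^2$ steps. That is, for every real $t\ge1$ and every index $k\ge t^2$ for which $Q_k$ is produced, $\mathrm{def}\,Q_k\le 1/t$.
   Context: $S^d$ is the unit sphere in $\mathbb{R}^{d+1}$ and $O$ is the origin. An index $m$ is a most violated constraint for $x\in S^d$ if $a_m^Tx=\min_j a_j^Tx$. A finite set $Q$ is positively spanning if it is affinely independent and $O\in\mathrm{conv}\,Q$. For affinely independent $Q$ whose projection $O'$ of $O$ onto $\mathrm{aff}\,Q$ lies in $\mathrm{conv}\,Q$, $\mathrm{def}\,Q=\|O'\|$. The touching sphere of an affinely independent $Q$ is the unique sphere $\{z:\|z-C\|=R\}$ with $C\in\mathrm{aff}\,Q$ containing $Q$. Algorithm 2.9: (1) Choose any $j$ and set $k=1$, $x^1=a_j$, $Q_1=\{a_j\}$. (2) If $a_i^Tx^k\ge0$ for all $i$, stop. Otherwise let $m$ be a most violated constraint for $x^k/\|x^k\|$, and let $y$ be the point on the line through $x^k$ and $a_m$ closest to the origin. (3) If $Q_k\cup\{a_m\}$ is positively spanning, stop. (4) Compute the center $C$ of the touching sphere of $Q_k\cup\{a_m\}$. (5) If $C\in\mathrm{conv}(Q_k\cup\{a_m\})$, set $x^{k+1}=C$, $Q_{k+1}=Q_k\cup\{a_m\}$ and $k:=k+1$, then go to (2). (6) Otherwise, let $y$ be the point where $\overline{yC}$ meets the relative boundary of $\mathrm{conv}(Q_k\cup\{a_m\})$.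 Let $F$ be a facet containing $y$, and let $a_j$ be the vertex of $Q_k$ not in $F$. Set $Q_k:=Q_k\setminus\{a_j\}$ and go to (4). *)

theory Defs
  imports "HOL-Analysis.Analysis"
begin

text \<open>Points live in a Euclidean space of dimension d+1 (= DIM('a)); the unit sphere
  S^d is sphere 0 1.  The origin O is 0.\<close>

definition most_violated :: "(nat \<Rightarrow> 'a::euclidean_space) \<Rightarrow> nat set \<Rightarrow> 'a \<Rightarrow> nat \<Rightarrow> bool" where
  "most_violated a I x m \<longleftrightarrow> m \<in> I \<and> a m \<bullet> x = Min ((\<lambda>j. a j \<bullet> x) ` I)"

definition pos_spanning :: "'a::euclidean_space set \<Rightarrow> bool" where
  "pos_spanning Q \<longleftrightarrow> \<not> affine_dependent Q \<and> 0 \<in> convex hull Q"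

definition proj0 :: "'a::euclidean_space set \<Rightarrow> 'a" where
  "proj0 Q = (THE p. p \<in> affine hull Q \<and> (\<forall>z\<in>affine hull Q. norm p \<le> norm z))"

definition deficiency :: "'a::euclidean_space set \<Rightarrow> real" where
  "deficiency Q = norm (proj0 Q)"

definition tcenter :: "'a::euclidean_space set \<Rightarrow> 'a" where
  "tcenter Q = (THE C. C \<in> affine hull Q \<and> (\<exists>R. \<forall>q\<in>Q. dist q C = R))"

text \<open>Inner loop of steps (4)--(6), for fixed a_m: starting from the current Q_k and
  the current point y, eventually step (5) produces x^{k+1} and Q_{k+1}.\<close>
inductive inner_loop :: "'a::euclidean_space \<Rightarrow> 'a set \<Rightarrow> 'a \<Rightarrow> 'a \<Rightarrow> 'a set \<Rightarrow> bool"
  for am :: 'a where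
  accept: "tcenter (insert am Q) \<in> convex hull (insert am Q) \<Longrightarrow>
           inner_loop am Q y (tcenter (insert am Q)) (insert am Q)"
| drop: "tcenter (insert am Q) \<notin> convex hull (insert am Q) \<Longrightarrow>
         y' \<in> closed_segment y (tcenter (insert am Q)) \<Longrightarrow>
         y' \<in> rel_frontier (convex hull (insert am Q)) \<Longrightarrow>
         F facet_of (convex hull (insert am Q)) \<Longrightarrow> y' \<in> F \<Longrightarrow>
         aj \<in> Q \<Longrightarrow> aj \<notin> F \<Longrightarrow>
         inner_loop am (Q - {aj}) y' x' Q' \<Longrightarrow>
         inner_loop am Q y x' Q'"

definition outer_step :: "(nat \<Rightarrow> 'a::euclidean_space) \<Rightarrow> nat set \<Rightarrow> 'a \<Rightarrow> 'a set \<Rightarrow> 'a \<Rightarrow> 'a set \<Rightarrow> bool" where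
  "outer_step a I x Q x' Q' \<longleftrightarrow>
     (\<exists>i\<in>I. a i \<bullet> x < 0) \<and>
     (\<exists>m. most_violated a I (x /\<^sub>R norm x) m \<and>
          \<not> pos_spanning (insert (a m) Q) \<and>
          (\<exists>y. y \<in> affine hull {x, a m} \<and> (\<forall>z\<in>affine hull {x, a m}. norm y \<le> norm z) \<and>
               inner_loop (a m) Q y x' Q'))"

text \<open>A (partial) run of Algorithm 2.9 producing x^1,Q_1,...,x^K,Q_K.\<close>
definition alg_run :: "(nat \<Rightarrow> 'a::euclidean_space) \<Rightarrow> nat set \<Rightarrow> nat \<Rightarrow> (nat \<Rightarrow> 'a) \<Rightarrow> (nat \<Rightarrow> 'a set) \<Rightarrow> bool" where
  "alg_run a I K xs Qs \<longleftrightarrow> 1 \<le> K \<and>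
     (\<exists>j\<in>I. xs 1 = a j \<and> Qs 1 = {a j}) \<and>
     (\<forall>k. 1 \<le> k \<and> k < K \<longrightarrow> outer_step a I (xs k) (Qs k) (xs (Suc k)) (Qs (Suc k)))"

end

theory Submission
  imports Defs
begin


definition minnorm :: "'a::euclidean_space set \<Rightarrow> 'a \<Rightarrow> bool" where
  "minnorm S p \<longleftrightarrow> p \<in> affine hull S \<and> (\<forall>z\<in>affine hull S. norm p \<le> norm z)"

lemma minnorm_orth:
  fixes p :: "'a::euclidean_space"
  assumes "minnorm S p" "z \<in> affine hull S"
  shows "(z - p) \<bullet> p = 0"
proof (rule ccontr)
  define d where "d = z - p"
  define c where "c = d \<bullet> p"
  define w where "w = d \<bullet> d"
  assume "(z - p) \<bullet> p \<noteq> 0"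
  hence c0: "c \<noteq> 0" by (simp add: c_def d_def)
  have w0: "w \<ge> 0" by (simp add: w_def)
  have key: "p \<bullet> p \<le> p \<bullet> p + 2 * s * c + s^2*w" for s
  proof -
    have "(1-s) *\<^sub>R p + s *\<^sub>R z \<in> affine hull S"
      using assms by (intro mem_affine) (auto simp: minnorm_def)
    moreover have "(1-s) *\<^sub>R p + s *\<^sub>R z = p + s *\<^sub>R d" by (simp add: d_def algebra_simps)
    ultimately have "norm p \<le> norm (p + s *\<^sub>R d)" using assms by (auto simp: minnorm_def)
    hence "norm p ^ 2 \<le> norm (p + s *\<^sub>R d) ^ 2" by (simp add: power_mono)
    also have "norm (p + s *\<^sub>R d) ^ 2 = (p + s *\<^sub>R d) \<bullet> (p + s *\<^sub>R d)" by (simp add: power2_norm_eq_inner)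
    also have "\<dots> = p \<bullet> p + 2 * s * c + s^2*w"
      by (simp add: c_def w_def inner_add_left inner_add_right inner_commute power2_eq_square algebra_simps)
    finally show ?thesis by (simp add: power2_norm_eq_inner)
  qed
  define s where "s = - c / (w + 1)"
  have "s * (w+1) = -c" using w0 by (simp add: s_def)
  have "0 \<le> 2 * s * c + s^2*w" using key[of s] by simp
  hence "0 \<le> (2 * s * c + s^2*w) * (w+1)^2" using w0 by simp
  also have "(2 * s * c + s^2*w) * (w+1)^2 = 2*c*(s*(w+1))*(w+1) + (s*(w+1))^2 * w"
    by (simp add: power2_eq_square algebra_simps)
  also have "\<dots> = - (c^2 * (w + 2))" using \<open>s * (w+1) = -c\<close> by (simp add: power2_eq_square algebra_simps)
  finally have "c^2 * (w+2) \<le> 0" by simp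
  moreover have "c^2 * (w+2) > 0" using c0 w0 by simp
  ultimately show False by simp
qed

lemma minnorm_inner: "minnorm S p \<Longrightarrow> z \<in> affine hull S \<Longrightarrow> z \<bullet> p = p \<bullet> p"
  using minnorm_orth[of S p z] by (simp add: inner_diff_left)

lemma minnorm_unique:
  assumes "minnorm S p" "minnorm S q" shows "p = q"
proof -
  have "(q - p) \<bullet> p = 0" "(p - q) \<bullet> q = 0"
    using assms minnorm_orth by (auto simp: minnorm_def)
  hence "(p - q) \<bullet> (p - q) = 0" by (simp add: inner_diff_left inner_diff_right inner_commute)
  thus ?thesis by simp
qed

lemma minnorm_exists:
  fixes S :: "'a::euclidean_space set"
  assumes "S \<noteq> {}" shows "\<exists>p. minnorm S p"
proof -
  have c: "closed (affine hull S)" by (simp add: closed_affine_hull)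
  have ne: "affine hull S \<noteq> {}" using assms by simp
  show ?thesis using closest_point_exists[OF c ne, of 0]
    unfolding minnorm_def by (auto simp: dist_norm)
qed

lemma proj0_minnorm:
  fixes S :: "'a::euclidean_space set"
  assumes "S \<noteq> {}" shows "minnorm S (proj0 S)"
proof -
  obtain p where p: "minnorm S p" using minnorm_exists[OF assms] by blast
  have "proj0 S = (THE p. minnorm S p)" by (simp add: proj0_def minnorm_def)
  also have "\<dots> = p"
    by (rule the_equality[where P="minnorm S", OF p], rule sym, erule minnorm_unique[OF p])
  finally have "proj0 S = p" .
  thus ?thesis using p by simp
qed

lemma tcenter_eq:
  fixes S :: "'a::euclidean_space set"
  assumes ne: "S \<noteq> {}" and sph: "S \<subseteq> sphere 0 1"
  shows "tcenter S = proj0 S"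
proof -
  define p where "p = proj0 S"
  have p: "minnorm S p" using proj0_minnorm[OF ne] by (simp add: p_def)
  have qp: "q \<bullet> p = p \<bullet> p" if "q \<in> S" for q
    using that by (intro minnorm_inner[OF p] hull_inc)
  have nq: "q \<bullet> q = 1" if "q \<in> S" for q
  proof -
    have "norm q = 1" using sph that by auto
    thus ?thesis by (simp add: norm_eq_1)
  qed
  have dq: "dist q p = sqrt (1 - p \<bullet> p)" if "q \<in> S" for q
  proof -
    have "dist q p ^ 2 = (q - p) \<bullet> (q - p)" by (simp add: dist_norm power2_norm_eq_inner)
    also have "\<dots> = 1 - p \<bullet> p" using qp[OF that] nq[OF that]
      by (simp add: inner_diff_left inner_diff_right inner_commute)
    finally show ?thesis by (intro sym[OF real_sqrt_unique]) auto
  qed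
  have uniq: "C = p" if C: "C \<in> affine hull S" and R: "\<forall>q\<in>S. dist q C = R" for C R
  proof -
    have "q \<bullet> (C - p) = (1 + C \<bullet> C - R^2)/2 - p \<bullet> p" if "q \<in> S" for q
    proof -
      have "R = norm (q - C)" using R that by (simp add: dist_norm)
      hence "R^2 = (q - C) \<bullet> (q - C)" by (simp add: power2_norm_eq_inner)
      also have "\<dots> = 1 - 2 * (q \<bullet> C) + C \<bullet> C" using nq[OF that]
        by (simp add: inner_diff_left inner_diff_right inner_commute)
      finally show ?thesis using qp[OF that] by (simp add: inner_diff_right field_simps)
    qed
    hence "S \<subseteq> {x. (C - p) \<bullet> x = (1 + C \<bullet> C - R^2)/2 - p \<bullet> p}" by (auto simp: inner_commute)
    hence sub: "affine hull S \<subseteq> {x. (C - p) \<bullet> x = (1 + C \<bullet> C - R^2)/2 - p \<bullet> p}"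
      by (intro hull_minimal affine_hyperplane)
    have "C \<in> {x. (C - p) \<bullet> x = (1 + C \<bullet> C - R^2)/2 - p \<bullet> p}" "p \<in> {x. (C - p) \<bullet> x = (1 + C \<bullet> C - R^2)/2 - p \<bullet> p}"
      using sub C p unfolding minnorm_def by blast+
    hence "(C - p) \<bullet> C = (C - p) \<bullet> p" by simp
    hence "(C - p) \<bullet> (C - p) = 0" by (simp add: inner_diff_right)
    thus ?thesis by simp
  qed
  have pa: "p \<in> affine hull S" using p by (simp add: minnorm_def)
  have "tcenter S = p" unfolding tcenter_def
  proof (rule the_equality)
    show "p \<in> affine hull S \<and> (\<exists>R. \<forall>q\<in>S. dist q p = R)" using pa dq by blast
  next
    fix C assume "C \<in> affine hull S \<and> (\<exists>R. \<forall>q\<in>S. dist q C = R)"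
    then show "C = p" using uniq by blast
  qed
  thus ?thesis by (simp add: p_def)
qed



lemma inner_inv:
  fixes am :: "'a::euclidean_space"
  assumes "inner_loop am Q y x' Q'"
  shows "am \<notin> Q \<Longrightarrow> finite Q \<Longrightarrow> insert am Q \<subseteq> sphere 0 1 \<Longrightarrow> y \<in> convex hull (insert am Q) \<Longrightarrow>
    Q' \<subseteq> insert am Q \<and> am \<in> Q' \<and> x' = proj0 Q' \<and> x' \<in> convex hull Q' \<and> norm x' \<le> norm y"
  using assms
proof induction
  case (accept Q y)
  let ?S = "insert am Q"
  have eq: "tcenter ?S = proj0 ?S" using accept by (intro tcenter_eq) auto
  have mn: "minnorm ?S (proj0 ?S)" by (intro proj0_minnorm) auto
  have "y \<in> affine hull ?S" using accept convex_hull_subset_affine_hull by blast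
  hence "norm (proj0 ?S) \<le> norm y" using mn by (auto simp: minnorm_def)
  thus ?case using accept eq by auto
next
  case (drop Q y' y F aj x' Q')
  let ?S = "insert am Q"
  have eq: "tcenter ?S = proj0 ?S" using drop.prems(3) by (intro tcenter_eq) auto
  have mn: "minnorm ?S (proj0 ?S)" by (intro proj0_minnorm) auto
  have "y \<in> affine hull ?S" using drop.prems(4) convex_hull_subset_affine_hull by blast
  hence ny: "norm (tcenter ?S) \<le> norm y" using mn eq by (auto simp: minnorm_def)
  have "closed_segment y (tcenter ?S) \<subseteq> cball 0 (norm y)"
    using ny by (intro closed_segment_subset) auto
  hence ny': "norm y' \<le> norm y" using drop(2) by auto
  have "compact ?S" using drop.prems(2) by (intro finite_imp_compact) auto
  moreover have "F face_of convex hull ?S" using drop(4) by (simp add: facet_of_def)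
  ultimately obtain S' where S': "S' \<subseteq> ?S" "F = convex hull S'" by (rule face_of_convex_hull_subset)
  have "S' \<subseteq> F" unfolding S'(2) by (rule hull_subset)
  hence "aj \<notin> S'" using drop.hyps(7) by blast
  moreover have "aj \<noteq> am" using drop.prems(1) drop.hyps(6) by auto
  ultimately have "S' \<subseteq> insert am (Q - {aj})" using S' by auto
  hence "y' \<in> convex hull (insert am (Q - {aj}))" using drop.hyps(5) S'(2) hull_mono[of S' "insert am (Q - {aj})"] by blast
  moreover have "insert am (Q - {aj}) \<subseteq> sphere 0 1" using drop.prems(3) by auto
  ultimately have IH: "Q' \<subseteq> insert am (Q - {aj}) \<and> am \<in> Q' \<and> x' = proj0 Q' \<and> x' \<in> convex hull Q' \<and> norm x' \<le> norm y'"
    using drop.IH drop.prems(1,2) by auto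
  thus ?case using ny' by auto
qed



lemma outer_inv:
  fixes a :: "nat \<Rightarrow> 'a::euclidean_space"
  assumes sph: "\<forall>i\<in>I. a i \<in> sphere 0 1" and fin: "finite I"
    and st: "outer_step a I x Q x' Q'" and Qne: "Q \<noteq> {}" and QI: "Q \<subseteq> a ` I"
    and xp: "x = proj0 Q" and xc: "x \<in> convex hull Q" and kb: "real k * (x \<bullet> x) \<le> 1"
  shows "Q' \<noteq> {} \<and> Q' \<subseteq> a ` I \<and> x' = proj0 Q' \<and> x' \<in> convex hull Q' \<and> real (Suc k) * (x' \<bullet> x') \<le> 1"
proof -
  obtain i where i: "i \<in> I" "a i \<bullet> x < 0" using st by (auto simp: outer_step_def)
  obtain m y where mv: "most_violated a I (x /\<^sub>R norm x) m"
    and ya: "y \<in> affine hull {x, a m}" and ymin: "\<forall>z\<in>affine hull {x, a m}. norm y \<le> norm z"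
    and il: "inner_loop (a m) Q y x' Q'"
    using st unfolding outer_step_def by blast
  define am where "am = a m"
  have mI: "m \<in> I" using mv by (simp add: most_violated_def)
  have x0: "x \<noteq> 0" using i by auto
  have nx: "norm x > 0" using x0 by simp
  have "am \<bullet> (x /\<^sub>R norm x) \<le> a i \<bullet> (x /\<^sub>R norm x)"
    using mv i fin unfolding most_violated_def am_def by (metis (no_types, lifting) Min_le finite_imageI image_eqI)
  hence "(am \<bullet> x) / norm x \<le> (a i \<bullet> x) / norm x" by (simp add: divide_inverse_commute)
  hence "am \<bullet> x \<le> a i \<bullet> x" using nx by (simp add: divide_right_mono_neg divide_le_cancel)
  hence amx: "am \<bullet> x < 0" using i by simp
  have mnQ: "minnorm Q x" using proj0_minnorm[OF Qne] xp by simp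
  have "q \<bullet> x \<ge> 0" if "q \<in> Q" for q
    using minnorm_inner[OF mnQ hull_inc[OF that]] by simp
  hence amQ: "am \<notin> Q" using amx by force
  have am1: "am \<bullet> am = 1" using sph mI by (simp add: am_def norm_eq_1)
  have finQ: "finite Q" using QI fin finite_subset by blast
  have mny: "minnorm {x, am} y" using ya ymin by (simp add: minnorm_def am_def)
  have o1: "(x - y) \<bullet> y = 0" by (rule minnorm_orth[OF mny]) (simp add: hull_inc)
  have o2: "(am - y) \<bullet> y = 0" by (rule minnorm_orth[OF mny]) (simp add: hull_inc)
  obtain u v where uv: "y = u *\<^sub>R x + v *\<^sub>R am" "u + v = 1"
    using ya by (auto simp: affine_hull_2 am_def)
  define s where "s = v"
  have "u = 1 - s" using uv by (simp add: s_def)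
  hence ys: "y = (1 - s) *\<^sub>R x + s *\<^sub>R am" using uv by (simp add: s_def)
  define \<alpha> where "\<alpha> = x \<bullet> x"
  define \<beta> where "\<beta> = x \<bullet> am"
  define N where "N = y \<bullet> y"
  have al0: "\<alpha> \<ge> 0" by (simp add: \<alpha>_def)
  have be0: "\<beta> < 0" using amx by (simp add: \<beta>_def inner_commute)
  have yx: "y \<bullet> x = (1 - s) * \<alpha> + s * \<beta>" unfolding ys by (simp add: \<alpha>_def \<beta>_def inner_add_left inner_commute[of am x])
  have yam: "y \<bullet> am = (1 - s) * \<beta> + s" using am1 unfolding ys by (simp add: \<beta>_def inner_add_left)
  have N1: "N = (1 - s) * \<alpha> + s * \<beta>" using o1 yx by (simp add: N_def inner_diff_left inner_commute[of x y])
  have N2: "N = (1 - s) * \<beta> + s" using o2 yam by (simp add: N_def inner_diff_left inner_commute[of am y])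
  have N0: "N \<ge> 0" by (simp add: N_def)
  have seq: "s * (1 - 2 * \<beta> + \<alpha>) = \<alpha> - \<beta>" using N1 N2 by (simp add: algebra_simps)
  have spos: "s \<ge> 0"
  proof (rule ccontr)
    assume "\<not> s \<ge> 0"
    hence "s * (1 - 2 * \<beta> + \<alpha>) < 0" using al0 be0 by (intro mult_neg_pos) auto
    thus False using seq al0 be0 by simp
  qed
  have sle: "s \<le> 1"
  proof (rule ccontr)
    assume "\<not> s \<le> 1"
    hence "s * (1 - 2 * \<beta> + \<alpha>) > 1 * (1 - 2 * \<beta> + \<alpha>)" using al0 be0 by (intro mult_strict_right_mono) auto
    thus False using seq al0 be0 by simp
  qed
  have Nb: "N * (\<alpha> + 1) \<le> \<alpha>"
  proof -
    have "N \<le> (1 - s) * \<alpha>" using N1 spos be0 by (simp add: mult_nonneg_nonpos)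
    moreover have "N \<le> s" using N2 sle be0 by (simp add: mult_nonneg_nonpos)
    hence "N * \<alpha> \<le> s * \<alpha>" using al0 by (simp add: mult_right_mono)
    ultimately show ?thesis by (simp add: algebra_simps)
  qed
  have yc: "y \<in> convex hull (insert am Q)"
  proof -
    have "y \<in> closed_segment x am" using ys spos sle by (auto simp: closed_segment_def)
    moreover have "x \<in> convex hull (insert am Q)" using xc hull_mono[of Q "insert am Q"] by blast
    moreover have "am \<in> convex hull (insert am Q)" by (simp add: hull_inc)
    ultimately show ?thesis using closed_segment_subset convex_convex_hull by blast
  qed
  have sphQ: "insert am Q \<subseteq> sphere 0 1" using QI sph mI by (auto simp: am_def)
  have R: "Q' \<subseteq> insert am Q \<and> am \<in> Q' \<and> x' = proj0 Q' \<and> x' \<in> convex hull Q' \<and> norm x' \<le> norm y"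
    using inner_inv[OF il[folded am_def] amQ finQ sphQ yc] .
  have "x' \<bullet> x' \<le> N" using R norm_ge_zero unfolding N_def
    by (metis power2_norm_eq_inner power_mono)
  hence "real (Suc k) * (x' \<bullet> x') \<le> real (Suc k) * N" by (intro mult_left_mono) auto
  also have "real (Suc k) * N \<le> 1"
  proof -
    have "real (Suc k) * N * (\<alpha> + 1) \<le> real (Suc k) * \<alpha>" using Nb by (simp add: mult.assoc mult_left_mono)
    also have "\<dots> \<le> \<alpha> + 1" using kb by (simp add: \<alpha>_def algebra_simps)
    finally show ?thesis using al0 by (simp add: mult_le_cancel_right1 pos_le_divide_eq)
  qed
  finally have "real (Suc k) * (x' \<bullet> x') \<le> 1" .
  moreover have "Q' \<subseteq> a ` I" using R QI mI by (auto simp: am_def)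
  ultimately show ?thesis using R by auto
qed



lemma proj0_sing: "proj0 {q::'a::euclidean_space} = q"
proof -
  have "minnorm {q} (proj0 {q})" by (rule proj0_minnorm) simp
  thus ?thesis by (simp add: minnorm_def)
qed

theorem lemma2p11:
  fixes a :: "nat \<Rightarrow> 'a::euclidean_space" and n K :: nat
    and xs :: "nat \<Rightarrow> 'a" and Qs :: "nat \<Rightarrow> 'a set" and t :: real and k :: nat
  assumes "\<forall>i\<in>{1..n}. a i \<in> sphere 0 1"
    and "alg_run a {1..n} K xs Qs"
    and "t \<ge> 1" and "1 \<le> k" and "k \<le> K" and "real k \<ge> t\<^sup>2"
  shows "deficiency (Qs k) \<le> 1 / t"
proof -
  let ?I = "{1..n}"
  have inv: "Qs j \<noteq> {} \<and> Qs j \<subseteq> a ` ?I \<and> xs j = proj0 (Qs j) \<and> xs j \<in> convex hull (Qs j)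
      \<and> real j * (xs j \<bullet> xs j) \<le> 1" if "1 \<le> j" "j \<le> K" for j
    using that
  proof (induction j)
    case 0
    then show ?case by simp
  next
    case (Suc j)
    show ?case
    proof (cases "j = 0")
      case True
      obtain i where i: "i \<in> ?I" "xs 1 = a i" "Qs 1 = {a i}" using assms(2) by (auto simp: alg_run_def)
      have "a i \<bullet> a i = 1" using assms(1) i(1) by (simp add: norm_eq_1)
      then show ?thesis using True i by (simp add: proj0_sing hull_inc)
    next
      case False
      hence j1: "1 \<le> j" "j \<le> K" using Suc.prems by auto
      have IH: "Qs j \<noteq> {} \<and> Qs j \<subseteq> a ` ?I \<and> xs j = proj0 (Qs j) \<and> xs j \<in> convex hull (Qs j)
          \<and> real j * (xs j \<bullet> xs j) \<le> 1" by (rule Suc.IH[OF j1])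
      have st: "outer_step a ?I (xs j) (Qs j) (xs (Suc j)) (Qs (Suc j))"
        using assms(2) False Suc.prems by (simp add: alg_run_def)
      show ?thesis by (rule outer_inv[OF assms(1) finite_atLeastAtMost st]) (use IH in blast)+
    qed
  qed
  have kb: "real k * (xs k \<bullet> xs k) \<le> 1" and dk: "xs k = proj0 (Qs k)" using inv[OF assms(4,5)] by blast+
  have "deficiency (Qs k) = norm (xs k)" using dk by (simp add: deficiency_def)
  moreover have "(t * norm (xs k))^2 \<le> 1"
  proof -
    have "(t * norm (xs k))^2 = t^2 * (xs k \<bullet> xs k)" by (simp add: power_mult_distrib power2_norm_eq_inner)
    also have "\<dots> \<le> real k * (xs k \<bullet> xs k)" using assms(6) by (intro mult_right_mono) auto
    finally show ?thesis using kb by simp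
  qed
  hence "t * norm (xs k) \<le> 1" using power2_le_imp_le[of "t * norm (xs k)" 1] by simp
  ultimately show ?thesis using assms(3) by (simp add: pos_le_divide_eq mult.commute)
qed

end
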